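(* Any function $K\in\mathfrak C_{cl}(\gamma_j)$ that vanishes on $\gamma_j$ can be written, in a neighbourhood of $\gamma_j$, $$K(x,\xi,y,\eta)=K(\xi,y,\eta)=a(\xi-c_o)+b\,y\eta$$ for some smooth functions $a,b\in\mathfrak C_{cl}(\gamma_j)$.
   Context: Let $\sigma$ be either $\sigma(x,y)=(x+2\pi,y)$ (direct case) or $\sigma(x,y)=(x+\pi,-y)$ (reverse case) acting on $\mathbb R^2$, and consider the cotangent bundle $T^*(\mathbb R^2/\sigma)$ with canonical coordinates $(x,y,\xi,\eta)$ (functions on it are functions on $T^*\mathbb R^2$ invariant under the cotangent lift of $\sigma$). Fix $c_o\in\mathbb R$ and let $\gamma_j=((\mathbb R\times\{0\})/\sigma)\times\{c_o\}\times\{0\}$, i.e. the circle $\{y=0,\ \xi=c_o,\ \eta=0\}$. The classical commutant is $\mathfrak C_{cl}(\gamma_j)=\{f\in C^\infty(T^*(\mathbb R^2/\sigma)) : \{f,\xi\}=\{f,y\eta\}=0 \text{ near }\gamma_j\}$, where $\{\cdot,\cdot\}$ is the Poisson bracket. *)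

theory Defs
  imports "HOL-Analysis.Analysis"
begin

text \<open>Points of T*R^2 with canonical coordinates (x, y, xi, eta).\<close>
type_synonym pt = "real \<times> real \<times> real \<times> real"

definition pd :: "pt \<Rightarrow> (pt \<Rightarrow> real) \<Rightarrow> pt \<Rightarrow> real" where
  "pd v f p = frechet_derivative f (at p) v"

definition e_x :: pt where "e_x = (1, 0, 0, 0)"
definition e_y :: pt where "e_y = (0, 1, 0, 0)"
definition e_xi :: pt where "e_xi = (0, 0, 1, 0)"
definition e_eta :: pt where "e_eta = (0, 0, 0, 1)"

fun Ck :: "nat \<Rightarrow> (pt \<Rightarrow> real) \<Rightarrow> bool" where
  "Ck 0 f = continuous_on UNIV f"
| "Ck (Suc k) f = (f differentiable_on UNIV \<and> (\<forall>v\<in>Basis. Ck k (pd v f)))"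

definition smooth :: "(pt \<Rightarrow> real) \<Rightarrow> bool" where
  "smooth f \<longleftrightarrow> (\<forall>k. Ck k f)"

definition poisson :: "(pt \<Rightarrow> real) \<Rightarrow> (pt \<Rightarrow> real) \<Rightarrow> pt \<Rightarrow> real" where
  "poisson f g p = pd e_xi f p * pd e_x g p - pd e_x f p * pd e_xi g p
                 + pd e_eta f p * pd e_y g p - pd e_y f p * pd e_eta g p"

datatype sigma_case = Direct | Reverse

fun sigma_lift :: "sigma_case \<Rightarrow> pt \<Rightarrow> pt" where
  "sigma_lift Direct (x, y, xi, eta) = (x + 2 * pi, y, xi, eta)"
| "sigma_lift Reverse (x, y, xi, eta) = (x + pi, - y, xi, - eta)"

text \<open>Smooth functions on T*(R^2/sigma) = smooth sigma-invariant functions on T*R^2.\<close>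
definition smooth_quot :: "sigma_case \<Rightarrow> (pt \<Rightarrow> real) set" where
  "smooth_quot s = {f. smooth f \<and> (\<forall>p. f (sigma_lift s p) = f p)}"

text \<open>The (lift of the) circle gamma_j = {y = 0, xi = c_o, eta = 0}.\<close>
definition gamma :: "real \<Rightarrow> pt set" where
  "gamma c = {(x, 0, c, 0) | x. True}"

definition xi_fun :: "pt \<Rightarrow> real" where "xi_fun = (\<lambda>(x, y, xi, eta). xi)"
definition yeta_fun :: "pt \<Rightarrow> real" where "yeta_fun = (\<lambda>(x, y, xi, eta). y * eta)"

definition commutant :: "sigma_case \<Rightarrow> real \<Rightarrow> (pt \<Rightarrow> real) set" where
  "commutant s c = {f. f \<in> smooth_quot s \<and>
     (\<exists>U. open U \<and> gamma c \<subseteq> U \<and>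
        (\<forall>p\<in>U. poisson f xi_fun p = 0 \<and> poisson f yeta_fun p = 0))}"

end

theory Submission
  imports Defs
begin


lemma Basis_pt: "(Basis :: pt set) = {e_x, e_y, e_xi, e_eta}"
  by (simp add: Basis_prod_def e_x_def e_y_def e_xi_def e_eta_def zero_prod_def insert_commute)

lemma smooth_pd: "smooth f \<Longrightarrow> v \<in> Basis \<Longrightarrow> smooth (pd v f)"
  unfolding smooth_def by (metis Ck.simps(2))

lemma smooth_cont: "smooth f \<Longrightarrow> continuous_on UNIV f"
  unfolding smooth_def by (metis Ck.simps(1))

lemma smooth_diff: "smooth f \<Longrightarrow> f differentiable (at p)"
  unfolding smooth_def by (metis Ck.simps(2) differentiable_on_def UNIV_I)

lemma smooth_pd_cont: "smooth f \<Longrightarrow> v \<in> Basis \<Longrightarrow> continuous_on UNIV (pd v f)"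
  by (simp add: smooth_cont smooth_pd)

lemma pd_eq: "(f has_derivative F) (at p) \<Longrightarrow> pd v f p = F v"
  unfolding pd_def by (metis frechet_derivative_at)

lemma pd_lin:
  assumes "f differentiable (at p)"
  shows "pd (a *\<^sub>R v + b *\<^sub>R w) f p = a * pd v f p + b * pd w f p"
proof -
  have "linear (frechet_derivative f (at p))" using assms by (rule linear_frechet_derivative)
  then show ?thesis unfolding pd_def by (simp add: linear_add linear_scale)
qed

lemma pd_scale:
  assumes "f differentiable (at p)"
  shows "pd (a *\<^sub>R v) f p = a * pd v f p"
  using pd_lin[OF assms, of a v 0 0] by simp

definition dmul :: "pt \<Rightarrow> pt \<Rightarrow> pt" where
  "dmul a p = (fst a * fst p, fst (snd a) * fst (snd p), fst (snd (snd a)) * fst (snd (snd p)),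
     snd (snd (snd a)) * snd (snd (snd p)))"

lemma linear_dmul: "linear (dmul a)"
  by (rule linearI) (auto simp: dmul_def algebra_simps)

lemma bl_dmul: "bounded_linear (dmul a)"
  using linear_dmul linear_conv_bounded_linear by blast

lemma dmul_basis: "v \<in> Basis \<Longrightarrow> dmul a v = (a \<bullet> v) *\<^sub>R v"
  by (auto simp: Basis_pt dmul_def e_x_def e_y_def e_xi_def e_eta_def inner_prod_def)

lemma continuous_on_dmul[continuous_intros]:
  "continuous_on S f \<Longrightarrow> continuous_on S g \<Longrightarrow> continuous_on S (\<lambda>x. dmul (f x) (g x))"
  unfolding dmul_def by (intro continuous_intros)

definition Phi :: "'a::euclidean_space set \<Rightarrow> (pt \<Rightarrow> real) \<Rightarrow> ('a \<Rightarrow> real) \<Rightarrow> ('a \<Rightarrow> pt) \<Rightarrow> ('a \<Rightarrow> pt) \<Rightarrow> pt \<Rightarrow> real" where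
  "Phi S f g m w p = integral S (\<lambda>t. g t * f (dmul (m t) p + w t))"


lemma bl_fd: "smooth f \<Longrightarrow> bounded_linear (frechet_derivative f (at q))"
  using smooth_diff frechet_derivative_works has_derivative_bounded_linear by blast

lemma pd_cont_comp:
  assumes "smooth f" "i \<in> Basis" "continuous_on S h"
  shows "continuous_on S (\<lambda>x. pd i f (h x))"
  using continuous_on_compose2[OF smooth_pd_cont[OF assms(1,2)] assms(3)] by simp

lemma f_cont_comp:
  assumes "smooth f" "continuous_on S h"
  shows "continuous_on S (\<lambda>x. f (h x))"
  using continuous_on_compose2[OF smooth_cont[OF assms(1)] assms(2)] by simp

lemma Phi_has_derivative:
  fixes lo hi :: "'a::euclidean_space"
  assumes f: "smooth f" and g: "continuous_on (cbox lo hi) g"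
    and m: "continuous_on (cbox lo hi) m" and w: "continuous_on (cbox lo hi) w"
  shows "(Phi (cbox lo hi) f g m w has_derivative
           (\<lambda>h. integral (cbox lo hi) (\<lambda>t. g t * pd (dmul (m t) h) f (dmul (m t) p + w t)))) (at p)"
proof -
  define A where "A t q = dmul (m t) q + w t" for t q
  define fx where "fx q t = Blinfun (\<lambda>h. g t * pd (dmul (m t) h) f (A t q))" for q t
  have bl: "bounded_linear (\<lambda>h. g t * pd (dmul (m t) h) f (A t q))" for t q
    unfolding pd_def
    by (rule bounded_linear_compose[OF bounded_linear_mult_right],
        rule bounded_linear_compose[OF bl_fd[OF f] bl_dmul])
  have fxa: "blinfun_apply (fx q t) = (\<lambda>h. g t * pd (dmul (m t) h) f (A t q))" for q t
    unfolding fx_def using bl by (simp add: bounded_linear_Blinfun_apply)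
  have der: "((\<lambda>q. g t * f (A t q)) has_derivative blinfun_apply (fx q t)) (at q within UNIV)" for q t
  proof -
    have dA: "(A t has_derivative dmul (m t)) (at q)"
      unfolding A_def by (rule has_derivative_add_const, rule bounded_linear_imp_has_derivative, rule bl_dmul)
    have "(f has_derivative frechet_derivative f (at (A t q))) (at (A t q))"
      using smooth_diff[OF f] frechet_derivative_works by blast
    from has_derivative_compose[OF dA this]
    have "((\<lambda>q. f (A t q)) has_derivative (\<lambda>h. frechet_derivative f (at (A t q)) (dmul (m t) h))) (at q)"
      by (simp add: o_def)
    from has_derivative_mult_right[OF this, of "g t"]
    show ?thesis unfolding fxa pd_def by simp
  qed
  have cA: "continuous_on S (\<lambda>x. A (snd x) (fst x))" if "snd ` S \<subseteq> cbox lo hi" for S :: "(pt \<times> 'a) set"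
  proof -
    have "continuous_on S (\<lambda>x. m (snd x))" "continuous_on S (\<lambda>x. w (snd x))"
      using continuous_on_compose2[OF m continuous_on_snd that] continuous_on_compose2[OF w continuous_on_snd that]
      by auto
    then show ?thesis unfolding A_def by (intro continuous_intros)
  qed
  have int: "(\<lambda>t. g t * f (A t q)) integrable_on cbox lo hi" for q
  proof (rule integrable_continuous)
    have "continuous_on (cbox lo hi) (\<lambda>t. A t q)"
      unfolding A_def by (intro continuous_intros m w)
    then show "continuous_on (cbox lo hi) (\<lambda>t. g t * f (A t q))"
      by (intro continuous_intros g f_cont_comp[OF f])
  qed
  have cfx: "continuous_on (UNIV \<times> cbox lo hi) (\<lambda>(q, t). fx q t)"
  proof (rule continuous_on_blinfun_componentwise)
    fix i :: pt assume i: "i \<in> Basis"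
    have e: "(case x of (q, t) \<Rightarrow> fx q t) i = g (snd x) * (m (snd x) \<bullet> i) * pd i f (A (snd x) (fst x))" for x
      using i by (cases x) (simp add: fxa dmul_basis pd_scale smooth_diff[OF f])
    have s: "snd ` (UNIV \<times> cbox lo hi) \<subseteq> cbox lo hi" by auto
    have "continuous_on (UNIV \<times> cbox lo hi) (\<lambda>x. g (snd x) * (m (snd x) \<bullet> i) * pd i f (A (snd x) (fst x)))"
      using continuous_on_compose2[OF g continuous_on_snd s] continuous_on_compose2[OF m continuous_on_snd s]
      by (intro continuous_intros pd_cont_comp[OF f i] cA[OF s]) auto
    then show "continuous_on (UNIV \<times> cbox lo hi) (\<lambda>x. (case x of (q, t) \<Rightarrow> fx q t) i)"
      unfolding e .
  qed
  have "((\<lambda>q. integral (cbox lo hi) (\<lambda>t. g t * f (A t q))) has_derivative integral (cbox lo hi) (fx p)) (at p within UNIV)"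
    by (rule leibniz_rule[where fx=fx]) (use der int cfx in auto)
  moreover have "fx p integrable_on cbox lo hi"
  proof (rule integrable_continuous)
    have "continuous_on (cbox lo hi) (\<lambda>t. (\<lambda>(q, t). fx q t) (p, t))"
      by (rule continuous_on_compose2[OF cfx]) (auto intro!: continuous_intros)
    then show "continuous_on (cbox lo hi) (fx p)" by simp
  qed
  then have "blinfun_apply (integral (cbox lo hi) (fx p)) = (\<lambda>h. integral (cbox lo hi) (\<lambda>t. g t * pd (dmul (m t) h) f (A t p)))"
    by (intro ext) (simp add: blinfun_apply_integral fxa)
  ultimately show ?thesis unfolding Phi_def A_def[symmetric]
    by simp
qed


lemma Phi_pd:
  fixes lo hi :: "'a::euclidean_space"
  assumes f: "smooth f" and g: "continuous_on (cbox lo hi) g"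
    and m: "continuous_on (cbox lo hi) m" and w: "continuous_on (cbox lo hi) w" and v: "v \<in> Basis"
  shows "pd v (Phi (cbox lo hi) f g m w) = Phi (cbox lo hi) (pd v f) (\<lambda>t. g t * (m t \<bullet> v)) m w"
proof
  fix p
  show "pd v (Phi (cbox lo hi) f g m w) p = Phi (cbox lo hi) (pd v f) (\<lambda>t. g t * (m t \<bullet> v)) m w p"
    using pd_eq[OF Phi_has_derivative[OF f g m w]]
    by (simp add: Phi_def dmul_basis[OF v] pd_scale[OF smooth_diff[OF f]] mult.assoc)
qed

lemma Phi_smooth:
  fixes lo hi :: "'a::euclidean_space"
  assumes f: "smooth f" and g: "continuous_on (cbox lo hi) g"
    and m: "continuous_on (cbox lo hi) m" and w: "continuous_on (cbox lo hi) w"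
  shows "smooth (Phi (cbox lo hi) f g m w)"
  unfolding smooth_def
proof
  fix k show "Ck k (Phi (cbox lo hi) f g m w)"
    using f g
  proof (induction k arbitrary: f g)
    case 0
    have "continuous (at p) (Phi (cbox lo hi) f g m w)" for p
      using has_derivative_continuous[OF Phi_has_derivative[OF 0(1,2) m w]] .
    then show ?case by (simp add: continuous_at_imp_continuous_on)
  next
    case (Suc k)
    have "Phi (cbox lo hi) f g m w differentiable_on UNIV"
      using Phi_has_derivative[OF Suc(2,3) m w] by (meson differentiableI differentiable_at_imp_differentiable_on)
    moreover have "Ck k (pd v (Phi (cbox lo hi) f g m w))" if v: "v \<in> Basis" for v
    proof -
      have "continuous_on (cbox lo hi) (\<lambda>t. g t * (m t \<bullet> v))"
        by (intro continuous_intros Suc(3) m)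
      then show ?thesis unfolding Phi_pd[OF Suc(2,3) m w v]
        by (intro Suc.IH smooth_pd[OF Suc(2) v])
    qed
    ultimately show ?case by simp
  qed
qed


lemma line_deriv:
  assumes "smooth f"
  shows "((\<lambda>t. f (q + t *\<^sub>R v)) has_real_derivative pd v f (q + t *\<^sub>R v)) (at t within S)"
proof -
  have d1: "((\<lambda>t. q + t *\<^sub>R v) has_derivative (\<lambda>h. h *\<^sub>R v)) (at t within S)"
    by (auto intro!: derivative_eq_intros)
  have "(f has_derivative frechet_derivative f (at (q + t *\<^sub>R v))) (at (q + t *\<^sub>R v))"
    using smooth_diff[OF assms] frechet_derivative_works by blast
  from has_derivative_compose[OF d1 has_derivative_at_withinI[OF this]]
  have "((\<lambda>t. f (q + t *\<^sub>R v)) has_derivative (\<lambda>h. frechet_derivative f (at (q + t *\<^sub>R v)) (h *\<^sub>R v))) (at t within S)"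
    by (simp add: o_def)
  moreover have "(\<lambda>h. frechet_derivative f (at (q + t *\<^sub>R v)) (h *\<^sub>R v)) = (\<lambda>h. h * pd v f (q + t *\<^sub>R v))"
    using pd_scale[OF smooth_diff[OF assms]] unfolding pd_def by auto
  ultimately show ?thesis unfolding has_field_derivative_def by (simp add: mult_commute_abs)
qed

lemma ftc_line:
  assumes "smooth f"
  shows "integral {0..1} (\<lambda>t. pd v f (q + t *\<^sub>R v)) = f (q + v) - f q"
proof -
  have "((\<lambda>t. pd v f (q + t *\<^sub>R v)) has_integral (f (q + 1 *\<^sub>R v) - f (q + 0 *\<^sub>R v))) {0..1}"
    by (rule fundamental_theorem_of_calculus)
      (auto simp: has_real_derivative_iff_has_vector_derivative[symmetric] intro!: line_deriv[OF assms])
  then show ?thesis by (simp add: integral_unique)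
qed

lemma affine_inv_pd:
  assumes "smooth f" "bounded_linear L" "\<And>q. f (L q + w) = k * f q"
  shows "pd (L v) f (L p + w) = k * pd v f p"
proof -
  have dA: "((\<lambda>q. L q + w) has_derivative L) (at p)"
    by (rule has_derivative_add_const, rule bounded_linear_imp_has_derivative, rule assms(2))
  have "(f has_derivative frechet_derivative f (at (L p + w))) (at (L p + w))"
    using smooth_diff[OF assms(1)] frechet_derivative_works by blast
  from has_derivative_compose[OF dA this]
  have "((\<lambda>q. f (L q + w)) has_derivative (\<lambda>h. frechet_derivative f (at (L p + w)) (L h))) (at p)"
    by (simp add: o_def)
  then have "((\<lambda>q. k * f q) has_derivative (\<lambda>h. frechet_derivative f (at (L p + w)) (L h))) (at p)"
    using assms(3) by simp
  moreover have "((\<lambda>q. k * f q) has_derivative (\<lambda>h. k * frechet_derivative f (at p) h)) (at p)"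
    using smooth_diff[OF assms(1)] frechet_derivative_works has_derivative_mult_right by blast
  ultimately have "(\<lambda>h. frechet_derivative f (at (L p + w)) (L h)) = (\<lambda>h. k * frechet_derivative f (at p) h)"
    using has_derivative_unique by blast
  then show ?thesis unfolding pd_def by metis
qed

lemma shift_inv_pd:
  assumes "smooth f" "\<And>q. f (q + w) = f q"
  shows "pd v f (p + w) = pd v f p"
  using affine_inv_pd[OF assms(1) bounded_linear_ident, of w 1 v p] assms(2) by simp

lemma dense_lim:
  fixes h :: "real \<Rightarrow> real"
  assumes "continuous_on UNIV h" "\<delta> > 0" "\<And>t. 0 < t \<Longrightarrow> t < \<delta> \<Longrightarrow> h t = 0"
  shows "h 0 = 0"
proof -
  have "(h \<longlongrightarrow> h 0) (at_right 0)"
    using assms(1) by (meson UNIV_I continuous_on_def filterlim_at_split tendsto_within_subset top_greatest)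
  moreover have "eventually (\<lambda>t. h t = 0) (at_right 0)"
    using assms(2,3) eventually_at_right_field by blast
  then have "(h \<longlongrightarrow> 0) (at_right 0)"
    by (simp add: tendsto_eventually)
  ultimately show ?thesis
    using tendsto_unique trivial_limit_at_right_real by blast
qed



lemma dense_box:
  fixes F :: "pt \<Rightarrow> real"
  assumes F: "continuous_on UNIV F" and b: "\<bar>y\<bar> < r" "\<bar>xi - c\<bar> < r" "\<bar>eta\<bar> < r"
    and H: "\<And>x' y' xi' eta'. \<bar>y'\<bar> < r \<Longrightarrow> \<bar>xi' - c\<bar> < r \<Longrightarrow> \<bar>eta'\<bar> < r \<Longrightarrow>
          y' \<noteq> 0 \<Longrightarrow> xi' \<noteq> c \<Longrightarrow> eta' \<noteq> 0 \<Longrightarrow> F (x', y', xi', eta') = 0"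
  shows "F (x, y, xi, eta) = 0"
proof -
  define sg :: "real \<Rightarrow> real" where "sg z = (if z \<ge> 0 then 1 else -1)" for z
  have sg: "\<bar>z + t * sg z\<bar> = \<bar>z\<bar> + t" if "t > 0" for z t
    using that by (auto simp: sg_def)
  define d :: pt where "d = (0, sg y, sg (xi - c), sg eta)"
  define \<delta> where "\<delta> = min (r - \<bar>y\<bar>) (min (r - \<bar>xi - c\<bar>) (r - \<bar>eta\<bar>))"
  have "\<delta> > 0" using b by (simp add: \<delta>_def)
  define h where "h t = F ((x, y, xi, eta) + t *\<^sub>R d)" for t
  have "continuous_on UNIV h" unfolding h_def
    by (rule continuous_on_compose2[OF F]) (auto intro!: continuous_intros)
  moreover have "h t = 0" if t: "0 < t" "t < \<delta>" for t
  proof -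
    have e: "(x, y, xi, eta) + t *\<^sub>R d = (x, y + t * sg y, xi + t * sg (xi - c), eta + t * sg eta)"
      by (simp add: d_def)
    have s2: "\<bar>xi + t * sg (xi - c) - c\<bar> = \<bar>xi - c\<bar> + t"
      using sg[OF t(1), of "xi - c"] by (simp add: algebra_simps)
    show ?thesis unfolding h_def e
    proof (rule H)
      show "\<bar>y + t * sg y\<bar> < r" "y + t * sg y \<noteq> 0" using sg[OF t(1), of y] t \<delta>_def by auto
      show "\<bar>eta + t * sg eta\<bar> < r" "eta + t * sg eta \<noteq> 0" using sg[OF t(1), of eta] t \<delta>_def by auto
      show "\<bar>xi + t * sg (xi - c) - c\<bar> < r" "xi + t * sg (xi - c) \<noteq> c" using s2 t \<delta>_def by auto
    qed
  qed
  ultimately have "h 0 = 0" using dense_lim[of h \<delta>] \<open>\<delta> > 0\<close> by simp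
  then show ?thesis by (simp add: h_def)
qed

lemma const_line_pd:
  assumes "smooth f" "\<And>t. f (p + t *\<^sub>R v) = f p"
  shows "pd v f p = 0"
proof -
  have "((\<lambda>t. f (p + t *\<^sub>R v)) has_real_derivative pd v f (p + 0 *\<^sub>R v)) (at 0)"
    by (rule line_deriv[OF assms(1)])
  then have "((\<lambda>t. f p) has_real_derivative pd v f p) (at 0)" using assms(2) by simp
  then show ?thesis using DERIV_const DERIV_unique by blast
qed

lemma periodic_int:
  fixes f :: "pt \<Rightarrow> real" and p w :: pt
  assumes "\<And>q. f (q + w) = f q"
  shows "f (p + of_int k *\<^sub>R w) = f p"
proof -
  have n: "f (q + of_nat n *\<^sub>R w) = f q" for q :: pt and n
  proof (induction n)
    case (Suc n)
    have "q + of_nat (Suc n) *\<^sub>R w = (q + of_nat n *\<^sub>R w) + w" by (simp add: algebra_simps)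
    then show ?case using assms[of "q + of_nat n *\<^sub>R w"] Suc by (simp add: add.assoc)
  qed simp
  show ?thesis
  proof (cases k rule: int_cases)
    case (nonneg n) then show ?thesis using n by simp
  next
    case (neg n)
    have "f (p + of_int k *\<^sub>R w) = f ((p + of_int k *\<^sub>R w) + of_nat (Suc n) *\<^sub>R w)" by (rule n[symmetric])
    also have "(p + of_int k *\<^sub>R w) + of_nat (Suc n) *\<^sub>R w = p + (of_int k + of_nat (Suc n)) *\<^sub>R w"
      by (simp add: scaleR_add_left add.assoc)
    also have "(of_int k + of_nat (Suc n) :: real) = 0" using neg by simp
    also have "p + 0 *\<^sub>R w = p" by simp
    finally show ?thesis .
  qed
qed

definition sm :: "sigma_case \<Rightarrow> pt" where
  "sm s = (if s = Direct then (1, 1, 1, 1) else (1, -1, 1, -1))"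
definition sw :: "sigma_case \<Rightarrow> pt" where
  "sw s = (if s = Direct then (2 * pi, 0, 0, 0) else (pi, 0, 0, 0))"

lemma sigma_affine: "sigma_lift s p = dmul (sm s) p + sw s"
proof (cases s)
  case Direct then show ?thesis by (cases p) (simp add: sm_def sw_def dmul_def)
next
  case Reverse then show ?thesis by (cases p) (simp add: sm_def sw_def dmul_def)
qed

lemma sigma_per:
  assumes "\<And>q. f (sigma_lift s q) = f q"
  shows "f (p + (2 * pi, 0, 0, 0)) = f p"
proof (cases s)
  case Direct
  then have "sigma_lift s p = p + (2 * pi, 0, 0, 0)" by (cases p) simp
  then show ?thesis using assms[of p] by simp
next
  case Reverse
  then have "sigma_lift s (sigma_lift s p) = p + (2 * pi, 0, 0, 0)" by (cases p) simp
  then show ?thesis using assms[of p] assms[of "sigma_lift s p"] by simp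
qed

lemma norm_pt_le: "norm ((a, b, c, d) :: pt) \<le> \<bar>a\<bar> + \<bar>b\<bar> + \<bar>c\<bar> + \<bar>d\<bar>"
proof -
  have "norm (c, d) \<le> \<bar>c\<bar> + \<bar>d\<bar>" using norm_Pair_le[of c d] by simp
  moreover have "norm (b, c, d) \<le> \<bar>b\<bar> + norm (c, d)" using norm_Pair_le[of b "(c, d)"] by simp
  moreover have "norm (a, b, c, d) \<le> \<bar>a\<bar> + norm (b, c, d)" using norm_Pair_le[of a "(b, c, d)"] by simp
  ultimately show ?thesis by linarith
qed

lemma pd_xi_fun: "pd v xi_fun p = fst (snd (snd v))"
proof -
  have e: "xi_fun = (\<lambda>p. fst (snd (snd p)))" by (auto simp: xi_fun_def)
  have "((\<lambda>p::pt. fst (snd (snd p))) has_derivative (\<lambda>p. fst (snd (snd p)))) (at p)"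
    by (intro bounded_linear_imp_has_derivative bounded_linear_compose[OF bounded_linear_fst]
        bounded_linear_compose[OF bounded_linear_snd] bounded_linear_snd)
  then show ?thesis unfolding e using pd_eq by simp
qed

lemma pd_yeta_fun: "pd v yeta_fun p = fst (snd v) * snd (snd (snd p)) + fst (snd p) * snd (snd (snd v))"
proof -
  have e: "yeta_fun = (\<lambda>p. fst (snd p) * snd (snd (snd p)))" by (auto simp: yeta_fun_def)
  have "((\<lambda>p::pt. fst (snd p) * snd (snd (snd p))) has_derivative
      (\<lambda>v. fst (snd p) * snd (snd (snd v)) + fst (snd v) * snd (snd (snd p)))) (at p)"
    by (intro derivative_eq_intros) auto
  then show ?thesis unfolding e using pd_eq by (simp add: add.commute)
qed
lemma poisson_xi: "poisson f xi_fun p = - pd e_x f p"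
  by (simp add: poisson_def pd_xi_fun e_x_def e_y_def e_xi_def e_eta_def)

lemma poisson_yeta: "poisson f yeta_fun (x, y, xi, eta) = pd e_eta f (x, y, xi, eta) * eta - pd e_y f (x, y, xi, eta) * y"
  by (simp add: poisson_def pd_yeta_fun e_x_def e_y_def e_xi_def e_eta_def)

lemma basis_mem: "e_x \<in> Basis" "e_y \<in> Basis" "e_xi \<in> Basis" "e_eta \<in> Basis"
  by (auto simp: Basis_pt)




lemma ftc_zero:
  assumes "smooth f" "\<And>t. 0 < t \<Longrightarrow> t \<le> 1 \<Longrightarrow> pd v f (q + t *\<^sub>R v) = 0"
  shows "f (q + v) = f q"
proof -
  have "integral {0..1} (\<lambda>t. pd v f (q + t *\<^sub>R v)) = integral {0..1} (\<lambda>t. 0)"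
    using integral_spike[of "{0}" "{0..1}" "\<lambda>t. 0::real" "\<lambda>t. pd v f (q + t *\<^sub>R v)"] assms(2)
    by auto
  then show ?thesis using ftc_line[OF assms(1), of v q] by simp
qed

lemma pd_vx: "smooth f \<Longrightarrow> pd (a, 0, 0, 0) f p = a * pd e_x f p"
  using pd_scale[OF smooth_diff[of f p], of a e_x] by (simp add: e_x_def)
lemma pd_vy: "smooth f \<Longrightarrow> pd (0, a, 0, 0) f p = a * pd e_y f p"
  using pd_scale[OF smooth_diff[of f p], of a e_y] by (simp add: e_y_def)
lemma pd_vxi: "smooth f \<Longrightarrow> pd (0, 0, a, 0) f p = a * pd e_xi f p"
  using pd_scale[OF smooth_diff[of f p], of a e_xi] by (simp add: e_xi_def)
lemma pd_veta: "smooth f \<Longrightarrow> pd (0, 0, 0, a) f p = a * pd e_eta f p"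
  using pd_scale[OF smooth_diff[of f p], of a e_eta] by (simp add: e_eta_def)

theorem lemma2p2:
  fixes s :: sigma_case and c :: real and K :: "pt \<Rightarrow> real"
  assumes "K \<in> commutant s c"
    and "\<forall>p\<in>gamma c. K p = 0"
  shows "\<exists>a b U. a \<in> commutant s c \<and> b \<in> commutant s c \<and> open U \<and> gamma c \<subseteq> U \<and>
           (\<forall>x y xi eta. (x, y, xi, eta) \<in> U \<longrightarrow>
               K (x, y, xi, eta) = a (x, y, xi, eta) * (xi - c) + b (x, y, xi, eta) * (y * eta)) \<and>
           (\<forall>x x' y xi eta. (x, y, xi, eta) \<in> U \<longrightarrow> (x', y, xi, eta) \<in> U \<longrightarrow>
               K (x, y, xi, eta) = K (x', y, xi, eta))"
proof -
  from assms(1) obtain U0 where Ks: "smooth K" and Kinv: "\<And>p. K (sigma_lift s p) = K p"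
    and U0: "open U0" "gamma c \<subseteq> U0"
    and PU0: "\<And>p. p \<in> U0 \<Longrightarrow> poisson K xi_fun p = 0 \<and> poisson K yeta_fun p = 0"
    unfolding commutant_def smooth_quot_def by blast
  have K0: "K (x, 0, c, 0) = 0" for x using assms(2) by (auto simp: gamma_def)
  define W :: pt where "W = (2 * pi, 0, 0, 0)"
  have Kper: "K (q + W) = K q" for q unfolding W_def by (rule sigma_per[where f=K and s=s]) (rule Kinv)
  have pdper: "pd v K (q + of_int k *\<^sub>R W) = pd v K q" for v q k
    by (rule shift_inv_pd[OF Ks]) (rule periodic_int[where f=K and w=W], rule Kper)
  define C where "C = (\<lambda>x. (x, 0, c, 0) :: pt) ` {0..2*pi}"
  have "compact C" unfolding C_def by (intro compact_continuous_image continuous_intros compact_Icc)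
  have "C \<subseteq> U0" using U0(2) by (auto simp: C_def gamma_def)
  obtain \<epsilon> where eps: "\<epsilon> > 0" "(\<Union>x\<in>C. ball x \<epsilon>) \<subseteq> U0"
    using compact_subset_open_imp_ball_epsilon_subset[OF \<open>compact C\<close> U0(1) \<open>C \<subseteq> U0\<close>] by blast
  define r where "r = \<epsilon> / 4"
  have r: "r > 0" using eps by (simp add: r_def)
  define T :: "pt set" where "T = {(x, y, xi, eta). \<bar>y\<bar> < r \<and> \<bar>xi - c\<bar> < r \<and> \<bar>eta\<bar> < r}"
  have memT: "(x, y, xi, eta) \<in> T \<longleftrightarrow> \<bar>y\<bar> < r \<and> \<bar>xi - c\<bar> < r \<and> \<bar>eta\<bar> < r" for x y xi eta
    by (simp add: T_def)
  have openT: "open T"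
  proof -
    have "T = {p. \<bar>fst (snd p)\<bar> < r} \<inter> {p. \<bar>fst (snd (snd p)) - c\<bar> < r} \<inter> {p. \<bar>snd (snd (snd p))\<bar> < r}"
      by (auto simp: T_def)
    then show ?thesis by (auto intro!: open_Int open_Collect_less continuous_intros)
  qed
  have gammaT: "gamma c \<subseteq> T" using r by (auto simp: gamma_def T_def)
  have cond: "pd e_x K (x, y, xi, eta) = 0 \<and> pd e_eta K (x, y, xi, eta) * eta = pd e_y K (x, y, xi, eta) * y"
    if "(x, y, xi, eta) \<in> T" for x y xi eta
  proof -
    define k where "k = \<lfloor>x / (2*pi)\<rfloor>"
    define x0 where "x0 = x - 2*pi*k"
    have fl: "of_int k \<le> x / (2*pi)" "x / (2*pi) < of_int k + 1"
      unfolding k_def by linarith+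
    have x0: "0 \<le> x0" "x0 \<le> 2*pi"
      using fl by (auto simp: x0_def field_simps)
    have inC: "(x0, 0, c, 0) \<in> C" using x0 by (auto simp: C_def)
    have dd: "dist (x0, 0, c, 0) (x0, y, xi, eta) < \<epsilon>"
    proof -
      have "dist (x0, 0, c, 0) (x0, y, xi, eta) = norm ((0::real), - y, c - xi, - eta)"
        by (simp add: dist_norm)
      also have "\<dots> \<le> \<bar>0\<bar> + \<bar>-y\<bar> + \<bar>c - xi\<bar> + \<bar>-eta\<bar>" by (rule norm_pt_le)
      also have "\<dots> < \<epsilon>" using that r abs_minus_commute[of c xi] unfolding memT r_def by auto
      finally show ?thesis .
    qed
    have "(x0, y, xi, eta) \<in> ball (x0, 0, c, 0) \<epsilon>" using dd by (simp only: mem_ball)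
    then have "(x0, y, xi, eta) \<in> (\<Union>x\<in>C. ball x \<epsilon>)" using inC by (rule UN_I[rotated])
    then have "(x0, y, xi, eta) \<in> U0" using eps(2) by blast
    then have P: "poisson K xi_fun (x0, y, xi, eta) = 0" "poisson K yeta_fun (x0, y, xi, eta) = 0"
      using PU0 by auto
    have e: "(x, y, xi, eta) = (x0, y, xi, eta) + of_int k *\<^sub>R W" by (simp add: x0_def W_def)
    show ?thesis using P unfolding e pdper poisson_xi poisson_yeta by simp
  qed
  have F1: "K (x', y, xi, eta) = K (x, y, xi, eta)" if "(x, y, xi, eta) \<in> T" for x x' y xi eta
  proof -
    have "K ((x, y, xi, eta) + (x' - x, 0, 0, 0)) = K (x, y, xi, eta)"
    proof (rule ftc_zero[OF Ks])
      fix t :: real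
      have "(x, y, xi, eta) + t *\<^sub>R (x' - x, 0, 0, 0) = (x + t * (x' - x), y, xi, eta)" by simp
      moreover have "(x + t * (x' - x), y, xi, eta) \<in> T" using that by (simp add: memT)
      ultimately show "pd (x' - x, 0, 0, 0) K ((x, y, xi, eta) + t *\<^sub>R (x' - x, 0, 0, 0)) = 0"
        using cond by (simp add: pd_vx[OF Ks])
    qed
    then show ?thesis by simp
  qed
  have F2: "K (x, y, xi, 0) = K (x, 0, xi, 0)" if "(x, y, xi, eta) \<in> T" for x y xi eta
  proof -
    have "K ((x, 0, xi, 0) + (0, y, 0, 0)) = K (x, 0, xi, 0)"
    proof (rule ftc_zero[OF Ks])
      fix t :: real assume t: "0 < t" "t \<le> 1"
      have e: "(x, 0, xi, 0) + t *\<^sub>R (0, y, 0, 0) = (x, t * y, xi, 0)" by simp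
      have "\<bar>t * y\<bar> \<le> \<bar>y\<bar>" using t by (simp add: abs_mult mult_left_le_one_le)
      then have "(x, t * y, xi, 0) \<in> T" using that r by (simp add: memT)
      then have "pd e_y K (x, t * y, xi, 0) * (t * y) = 0" using cond by force
      then have "y * pd e_y K (x, t * y, xi, 0) = 0" using t by auto
      then show "pd (0, y, 0, 0) K ((x, 0, xi, 0) + t *\<^sub>R (0, y, 0, 0)) = 0"
        unfolding e by (simp add: pd_vy[OF Ks])
    qed
    then show ?thesis by simp
  qed
  have F3: "K (x, 0, xi, eta) = K (x, 0, xi, 0)" if "(x, y, xi, eta) \<in> T" for x y xi eta
  proof -
    have "K ((x, 0, xi, 0) + (0, 0, 0, eta)) = K (x, 0, xi, 0)"
    proof (rule ftc_zero[OF Ks])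
      fix t :: real assume t: "0 < t" "t \<le> 1"
      have e: "(x, 0, xi, 0) + t *\<^sub>R (0, 0, 0, eta) = (x, 0, xi, t * eta)" by simp
      have "\<bar>t * eta\<bar> \<le> \<bar>eta\<bar>" using t by (simp add: abs_mult mult_left_le_one_le)
      then have "(x, 0, xi, t * eta) \<in> T" using that r by (simp add: memT)
      then have "pd e_eta K (x, 0, xi, t * eta) * (t * eta) = 0" using cond by force
      then have "eta * pd e_eta K (x, 0, xi, t * eta) = 0" using t by auto
      then show "pd (0, 0, 0, eta) K ((x, 0, xi, 0) + t *\<^sub>R (0, 0, 0, eta)) = 0"
        unfolding e by (simp add: pd_veta[OF Ks])
    qed
    then show ?thesis by simp
  qed
  define KXI where "KXI = pd e_xi K"
  define KY where "KY = pd e_y K"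
  define KYE where "KYE = pd e_eta KY"
  have sKXI: "smooth KXI" unfolding KXI_def by (rule smooth_pd[OF Ks basis_mem(3)])
  have sKY: "smooth KY" unfolding KY_def by (rule smooth_pd[OF Ks basis_mem(2)])
  have sKYE: "smooth KYE" unfolding KYE_def by (rule smooth_pd[OF sKY basis_mem(4)])
  define a where "a = Phi (cbox 0 (1::real)) KXI (\<lambda>t. 1) (\<lambda>t. (1, 0, t, 0)) (\<lambda>t. (0, 0, (1 - t) * c, 0))"
  define b where "b = Phi (cbox (0, 0) (1::real, 1::real)) KYE (\<lambda>t. 1) (\<lambda>st. (1, fst st, 1, snd st)) (\<lambda>t. 0)"
  have sa: "smooth a" unfolding a_def by (intro Phi_smooth sKXI continuous_intros)
  have sb: "smooth b" unfolding b_def by (intro Phi_smooth sKYE continuous_intros)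
  have I2: "K (x, 0, xi, 0) = (xi - c) * a (x, y, xi, eta)" for x y xi eta
  proof -
    have "a (x, y, xi, eta) = integral {0..1} (\<lambda>t. KXI ((x, 0, c, 0) + t *\<^sub>R (0, 0, xi - c, 0)))"
      unfolding a_def Phi_def cbox_interval
      by (rule integral_cong) (simp add: dmul_def algebra_simps)
    then have "(xi - c) * a (x, y, xi, eta) = integral {0..1} (\<lambda>t. pd (0, 0, xi - c, 0) K ((x, 0, c, 0) + t *\<^sub>R (0, 0, xi - c, 0)))"
      by (simp add: pd_vxi[OF Ks] KXI_def)
    also have "\<dots> = K ((x, 0, c, 0) + (0, 0, xi - c, 0)) - K (x, 0, c, 0)" by (rule ftc_line[OF Ks])
    finally show ?thesis using K0 by simp
  qed
  have I1: "y * eta * b (x, y, xi, eta) = K (x, y, xi, eta) - K (x, y, xi, 0) - K (x, 0, xi, eta) + K (x, 0, xi, 0)"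
    for x y xi eta
  proof -
    have ct: "continuous_on (cbox (0, 0) (1, 1)) (\<lambda>st. KYE (x, fst st * y, xi, snd st * eta))"
      by (intro f_cont_comp[OF sKYE] continuous_intros)
    have "b (x, y, xi, eta) = integral (cbox (0, 0) (1, 1)) (\<lambda>st. KYE (x, fst st * y, xi, snd st * eta))"
      unfolding b_def Phi_def by (rule integral_cong) (simp add: dmul_def)
    also have "\<dots> = integral {0..1} (\<lambda>s. integral {0..1} (\<lambda>t. KYE (x, s * y, xi, t * eta)))"
      using integral_prod_continuous[OF ct] by (simp add: cbox_interval)
    finally have bI: "b (x, y, xi, eta) = integral {0..1} (\<lambda>s. integral {0..1} (\<lambda>t. KYE (x, s * y, xi, t * eta)))" .
    have inner: "eta * integral {0..1} (\<lambda>t. KYE (x, s * y, xi, t * eta)) = KY (x, s * y, xi, eta) - KY (x, s * y, xi, 0)" for s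
    proof -
      have "eta * integral {0..1} (\<lambda>t. KYE (x, s * y, xi, t * eta)) =
          integral {0..1} (\<lambda>t. pd (0, 0, 0, eta) KY ((x, s * y, xi, 0) + t *\<^sub>R (0, 0, 0, eta)))"
        by (simp add: pd_veta[OF sKY] KYE_def)
      also have "\<dots> = KY ((x, s * y, xi, 0) + (0, 0, 0, eta)) - KY (x, s * y, xi, 0)" by (rule ftc_line[OF sKY])
      finally show ?thesis by simp
    qed
    have outer: "y * integral {0..1} (\<lambda>s. KY (x, s * y, xi, e)) = K (x, y, xi, e) - K (x, 0, xi, e)" for e
    proof -
      have "y * integral {0..1} (\<lambda>s. KY (x, s * y, xi, e)) =
          integral {0..1} (\<lambda>s. pd (0, y, 0, 0) K ((x, 0, xi, e) + s *\<^sub>R (0, y, 0, 0)))"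
        by (simp add: pd_vy[OF Ks] KY_def)
      also have "\<dots> = K ((x, 0, xi, e) + (0, y, 0, 0)) - K (x, 0, xi, e)" by (rule ftc_line[OF Ks])
      finally show ?thesis by simp
    qed
    have int: "(\<lambda>s. KY (x, s * y, xi, e)) integrable_on {0..1}" for e
      by (intro integrable_continuous_real f_cont_comp[OF sKY] continuous_intros)
    have "eta * b (x, y, xi, eta) = integral {0..1} (\<lambda>s. KY (x, s * y, xi, eta) - KY (x, s * y, xi, 0))"
    proof -
      have "eta * b (x, y, xi, eta) = integral {0..1} (\<lambda>s. eta * integral {0..1} (\<lambda>t. KYE (x, s * y, xi, t * eta)))"
        unfolding bI by (simp only: integral_mult_right)
      then show ?thesis unfolding inner .
    qed
    also have "\<dots> = integral {0..1} (\<lambda>s. KY (x, s * y, xi, eta)) - integral {0..1} (\<lambda>s. KY (x, s * y, xi, 0))"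
      by (rule integral_diff[OF int int])
    finally have e1: "eta * b (x, y, xi, eta) = integral {0..1} (\<lambda>s. KY (x, s * y, xi, eta)) - integral {0..1} (\<lambda>s. KY (x, s * y, xi, 0))" .
    have "y * eta * b (x, y, xi, eta) = y * integral {0..1} (\<lambda>s. KY (x, s * y, xi, eta)) - y * integral {0..1} (\<lambda>s. KY (x, s * y, xi, 0))"
      unfolding mult.assoc e1 by (simp add: right_diff_distrib)
    then show ?thesis unfolding outer by simp
  qed
  have EQ: "K (x, y, xi, eta) = a (x, y, xi, eta) * (xi - c) + b (x, y, xi, eta) * (y * eta)"
    if "(x, y, xi, eta) \<in> T" for x y xi eta
    using I1[of y eta x xi] I2[of x xi y eta] F2[OF that] F3[OF that] by (simp add: algebra_simps)
  have Kaff: "K (dmul (sm s) q + sw s) = 1 * K q" for q using Kinv[of q] by (simp add: sigma_affine)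
  have KXIinv: "KXI (sigma_lift s q) = KXI q" for q
  proof -
    have "dmul (sm s) e_xi = e_xi" by (cases s) (simp_all add: sm_def dmul_def e_xi_def)
    then show ?thesis using affine_inv_pd[OF Ks bl_dmul Kaff, of e_xi q]
      by (simp add: KXI_def sigma_affine)
  qed
  define \<epsilon>s :: real where "\<epsilon>s = (if s = Direct then 1 else -1)"
  have es: "\<epsilon>s * \<epsilon>s = 1" by (simp add: \<epsilon>s_def)
  have KYinv: "KY (dmul (sm s) q + sw s) = \<epsilon>s * KY q" for q
  proof -
    have "dmul (sm s) e_y = \<epsilon>s *\<^sub>R e_y" by (cases s) (simp_all add: sm_def dmul_def e_y_def \<epsilon>s_def)
    then have "\<epsilon>s * KY (dmul (sm s) q + sw s) = KY q"
      using affine_inv_pd[OF Ks bl_dmul Kaff, of e_y q] pd_scale[OF smooth_diff[OF Ks]]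
      by (simp add: KY_def)
    then have "\<epsilon>s * (\<epsilon>s * KY (dmul (sm s) q + sw s)) = \<epsilon>s * KY q" by simp
    then show ?thesis unfolding mult.assoc[symmetric] es by simp
  qed
  have KYEinv: "KYE (sigma_lift s q) = KYE q" for q
  proof -
    have "dmul (sm s) e_eta = \<epsilon>s *\<^sub>R e_eta" by (cases s) (simp_all add: sm_def dmul_def e_eta_def \<epsilon>s_def)
    then have "\<epsilon>s * KYE (dmul (sm s) q + sw s) = \<epsilon>s * KYE q"
      using affine_inv_pd[OF sKY bl_dmul KYinv, of e_eta q] pd_scale[OF smooth_diff[OF sKY]]
      by (simp add: KYE_def)
    then show ?thesis using es by (auto simp: sigma_affine)
  qed
  have ainv: "a (sigma_lift s p) = a p" for p
    unfolding a_def Phi_def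
  proof (rule integral_cong)
    fix t
    have "dmul (1, 0, t, 0) (sigma_lift s p) + (0, 0, (1 - t) * c, 0) = sigma_lift s (dmul (1, 0, t, 0) p + (0, 0, (1 - t) * c, 0))"
      by (cases s; cases p) (simp_all add: dmul_def)
    then show "1 * KXI (dmul (1, 0, t, 0) (sigma_lift s p) + (0, 0, (1 - t) * c, 0)) = 1 * KXI (dmul (1, 0, t, 0) p + (0, 0, (1 - t) * c, 0))"
      by (simp add: KXIinv)
  qed
  have binv: "b (sigma_lift s p) = b p" for p
    unfolding b_def Phi_def
  proof (rule integral_cong)
    fix st :: "real \<times> real"
    have "dmul (1, fst st, 1, snd st) (sigma_lift s p) + 0 = sigma_lift s (dmul (1, fst st, 1, snd st) p + 0)"
      by (cases s; cases p) (simp_all add: dmul_def)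
    then show "1 * KYE (dmul (1, fst st, 1, snd st) (sigma_lift s p) + 0) = 1 * KYE (dmul (1, fst st, 1, snd st) p + 0)"
      by (simp add: KYEinv)
  qed
  have aX: "a (x + h, y, xi, eta) = a (x, y, xi, eta)" if "(x, y, xi, eta) \<in> T" for x h y xi eta
  proof -
    define F where "F q = a (q + (h, 0, 0, 0)) - a q" for q
    have "continuous_on UNIV F" unfolding F_def
      by (intro continuous_intros f_cont_comp[OF sa] smooth_cont[OF sa])
    moreover have "F (x1, y1, xi1, eta1) = 0" if "\<bar>y1\<bar> < r" "\<bar>xi1 - c\<bar> < r" "\<bar>eta1\<bar> < r" "xi1 \<noteq> c"
      for x1 y1 xi1 eta1
    proof -
      have T1: "(x1, 0, xi1, 0) \<in> T" using that r by (simp add: memT)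
      have "(xi1 - c) * a (x1 + h, y1, xi1, eta1) = (xi1 - c) * a (x1, y1, xi1, eta1)"
        using I2[of "x1 + h" xi1 y1 eta1] I2[of x1 xi1 y1 eta1] F1[OF T1, of "x1 + h"] by force
      then show ?thesis using that(4) by (simp add: F_def)
    qed
    ultimately have "F (x, y, xi, eta) = 0"
      using dense_box[of F y r xi c eta x] that by (simp add: memT)
    then show ?thesis by (simp add: F_def)
  qed
  have bX: "b (x + h, y, xi, eta) = b (x, y, xi, eta)" if "(x, y, xi, eta) \<in> T" for x h y xi eta
  proof -
    define F where "F q = b (q + (h, 0, 0, 0)) - b q" for q
    have "continuous_on UNIV F" unfolding F_def
      by (intro continuous_intros f_cont_comp[OF sb] smooth_cont[OF sb])
    moreover have "F (x1, y1, xi1, eta1) = 0" if "\<bar>y1\<bar> < r" "\<bar>xi1 - c\<bar> < r" "\<bar>eta1\<bar> < r" "y1 \<noteq> 0" "eta1 \<noteq> 0"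
      for x1 y1 xi1 eta1
    proof -
      have T1: "(x1, y1, xi1, eta1) \<in> T" "(x1, 0, xi1, 0) \<in> T" "(x1, y1, xi1, 0) \<in> T" "(x1, 0, xi1, eta1) \<in> T"
        using that r by (simp_all add: memT)
      have "y1 * eta1 * b (x1 + h, y1, xi1, eta1) = y1 * eta1 * b (x1, y1, xi1, eta1)"
        unfolding I1 using F1[OF T1(1), of "x1 + h"] F1[OF T1(2), of "x1 + h"] F1[OF T1(3), of "x1 + h"] F1[OF T1(4), of "x1 + h"]
        by simp
      then show ?thesis using that(4,5) by (simp add: F_def)
    qed
    ultimately have "F (x, y, xi, eta) = 0"
      using dense_box[of F y r xi c eta x] that by (simp add: memT)
    then show ?thesis by (simp add: F_def)
  qed
  have ax0: "pd e_x a (x, y, xi, eta) = 0" if "(x, y, xi, eta) \<in> T" for x y xi eta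
    by (rule const_line_pd[OF sa]) (simp add: e_x_def aX[OF that])
  have bx0: "pd e_x b (x, y, xi, eta) = 0" if "(x, y, xi, eta) \<in> T" for x y xi eta
    by (rule const_line_pd[OF sb]) (simp add: e_x_def bX[OF that])
  have ay0: "pd e_y a p = 0" "pd e_eta a p = 0" for p
  proof -
    have "continuous_on (cbox 0 (1::real)) (\<lambda>t::real. (1::real, 0::real, t, 0::real))"
      "continuous_on (cbox 0 (1::real)) (\<lambda>t::real. (0::real, 0::real, (1 - t) * c, 0::real))"
      "continuous_on (cbox 0 (1::real)) (\<lambda>t::real. 1::real)"
      by (intro continuous_intros)+
    note P = Phi_pd[OF sKXI this(3) this(1) this(2)]
    show "pd e_y a p = 0" unfolding a_def P[OF basis_mem(2)]
      by (simp add: Phi_def e_y_def)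
    show "pd e_eta a p = 0" unfolding a_def P[OF basis_mem(4)]
      by (simp add: Phi_def e_eta_def)
  qed
  have bH: "pd e_eta b (x, y, xi, eta) * eta - pd e_y b (x, y, xi, eta) * y = 0" if "(x, y, xi, eta) \<in> T" for x y xi eta
  proof -
    define G where "G q = pd e_eta b q * snd (snd (snd q)) - pd e_y b q * fst (snd q)" for q
    have "continuous_on UNIV G" unfolding G_def
      by (intro continuous_intros smooth_pd_cont[OF sb basis_mem(4)] smooth_pd_cont[OF sb basis_mem(2)])
    moreover have "G (x1, y1, xi1, eta1) = 0" if "\<bar>y1\<bar> < r" "\<bar>xi1 - c\<bar> < r" "\<bar>eta1\<bar> < r" "y1 \<noteq> 0" "eta1 \<noteq> 0"
      for x1 y1 xi1 eta1
    proof -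
      define q :: pt where "q = (x1, y1, xi1, eta1)"
      define v :: pt where "v = (0, - y1, 0, eta1)"
      have T1: "q \<in> T" "(x1, y1, xi1, 0) \<in> T" "(x1, 0, xi1, eta1) \<in> T"
        using that r by (simp_all add: memT q_def)
      have vv: "v = (- y1) *\<^sub>R e_y + eta1 *\<^sub>R e_eta" by (simp add: v_def e_y_def e_eta_def)
      have pvb: "pd v b q = G q"
        unfolding vv pd_lin[OF smooth_diff[OF sb]] by (simp add: G_def q_def algebra_simps)
      have pvK: "pd v K q = 0"
        unfolding vv pd_lin[OF smooth_diff[OF Ks]] using cond[OF T1(1)[unfolded q_def]] by (simp add: q_def algebra_simps)
      have p1: "pd (0, - y1, 0, 0) K (x1, y1, xi1, 0) = 0"
        using cond[OF T1(2)] by (auto simp: pd_vy[OF Ks])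
      have p2: "pd (0, 0, 0, eta1) K (x1, 0, xi1, eta1) = 0"
        using cond[OF T1(3)] by (auto simp: pd_veta[OF Ks])
      define \<phi> where "\<phi> t = K (q + t *\<^sub>R v) - K ((x1, y1, xi1, 0) + t *\<^sub>R (0, - y1, 0, 0))
          - K ((x1, 0, xi1, eta1) + t *\<^sub>R (0, 0, 0, eta1)) + K (x1, 0, xi1, 0)" for t
      have psi: "(\<lambda>t. (y1 * eta1 * ((1 - t) * (1 + t))) * b (q + t *\<^sub>R v)) = \<phi>"
      proof
        fix t
        have e: "y1 * eta1 * ((1 - t) * (1 + t)) = (y1 + t * (- y1)) * (eta1 + t * eta1)" by algebra
        show "(y1 * eta1 * ((1 - t) * (1 + t))) * b (q + t *\<^sub>R v) = \<phi> t"
          unfolding e using I1[of "y1 + t * (- y1)" "eta1 + t * eta1" x1 xi1]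
          by (simp add: \<phi>_def q_def v_def)
      qed
      have d1: "((\<lambda>t. b (q + t *\<^sub>R v)) has_real_derivative pd v b q) (at 0)"
        using line_deriv[OF sb, of q v 0 UNIV] by simp
      have dpsi: "((\<lambda>t. (y1 * eta1 * ((1 - t) * (1 + t))) * b (q + t *\<^sub>R v)) has_real_derivative y1 * eta1 * pd v b q) (at 0)"
        using d1 by (auto intro!: derivative_eq_intros)
      have l1: "((\<lambda>t. K (q + t *\<^sub>R v)) has_real_derivative pd v K q) (at 0)"
        using line_deriv[OF Ks, of q v 0 UNIV] by simp
      have l2: "((\<lambda>t. K ((x1, y1, xi1, 0) + t *\<^sub>R (0, - y1, 0, 0))) has_real_derivative pd (0, - y1, 0, 0) K (x1, y1, xi1, 0)) (at 0)"
        using line_deriv[OF Ks, of "(x1, y1, xi1, 0)" "(0, - y1, 0, 0)" 0 UNIV] by simp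
      have l3: "((\<lambda>t. K ((x1, 0, xi1, eta1) + t *\<^sub>R (0, 0, 0, eta1))) has_real_derivative pd (0, 0, 0, eta1) K (x1, 0, xi1, eta1)) (at 0)"
        using line_deriv[OF Ks, of "(x1, 0, xi1, eta1)" "(0, 0, 0, eta1)" 0 UNIV] by simp
      have dphi: "(\<phi> has_real_derivative 0) (at 0)"
      proof -
        have "(\<phi> has_real_derivative (pd v K q - pd (0, - y1, 0, 0) K (x1, y1, xi1, 0) - pd (0, 0, 0, eta1) K (x1, 0, xi1, eta1) + 0)) (at 0)"
          unfolding \<phi>_def[abs_def] by (intro DERIV_add DERIV_diff l1 l2 l3 DERIV_const)
        then show ?thesis using pvK p1 p2 by simp
      qed
      have "y1 * eta1 * pd v b q = 0" using DERIV_unique[OF dpsi[unfolded psi] dphi] .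
      then show ?thesis using that(4,5) pvb by (simp add: q_def)
    qed
    ultimately have "G (x, y, xi, eta) = 0"
      using dense_box[of G y r xi c eta x] that by (simp add: memT)
    then show ?thesis by (simp add: G_def)
  qed
  have acom: "a \<in> commutant s c"
  proof -
    have "\<forall>p\<in>T. poisson a xi_fun p = 0 \<and> poisson a yeta_fun p = 0"
    proof
      fix p assume pT: "p \<in> T"
      obtain x y xi eta where p: "p = (x, y, xi, eta)" by (cases p)
      show "poisson a xi_fun p = 0 \<and> poisson a yeta_fun p = 0"
        using ax0 ay0 pT unfolding p poisson_xi poisson_yeta by simp
    qed
    then show ?thesis unfolding commutant_def smooth_quot_def using sa ainv openT gammaT by blast
  qed
  have bcom: "b \<in> commutant s c"
  proof -
    have "\<forall>p\<in>T. poisson b xi_fun p = 0 \<and> poisson b yeta_fun p = 0"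
    proof
      fix p assume pT: "p \<in> T"
      obtain x y xi eta where p: "p = (x, y, xi, eta)" by (cases p)
      show "poisson b xi_fun p = 0 \<and> poisson b yeta_fun p = 0"
        using bx0 bH pT unfolding p poisson_xi poisson_yeta by simp
    qed
    then show ?thesis unfolding commutant_def smooth_quot_def using sb binv openT gammaT by blast
  qed
  have XI: "\<forall>x x' y xi eta. (x, y, xi, eta) \<in> T \<longrightarrow> (x', y, xi, eta) \<in> T \<longrightarrow>
               K (x, y, xi, eta) = K (x', y, xi, eta)"
    using F1 by metis
  have EQ': "\<forall>x y xi eta. (x, y, xi, eta) \<in> T \<longrightarrow>
               K (x, y, xi, eta) = a (x, y, xi, eta) * (xi - c) + b (x, y, xi, eta) * (y * eta)"
    using EQ by blast
  show ?thesis using acom bcom openT gammaT EQ' XI by blast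
qed

end
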